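(* For a regular curve $\gamma: I\to\mathbb{E}^4$, the following are equivalent: (1) $\gamma$ admits a generalized Bishop frame of type D; (2) there exist a smooth unit normal vector field $\mathbb{D}_1$ along $\gamma$ and a smooth function $d_1$ on $I$ such that $\mathbb{T}'=d_1\mathbb{D}_1$.
   Context: A regular curve $\gamma: I\to\mathbb{E}^4$ ($I$ an open interval) is considered with arc-length parametrization; $\mathbb{T}=\gamma'$ is its unit tangent vector. A frame on $\gamma$ is an ordered orthonormal frame $(\mathbb{T},\mathbb{Z}_1,\mathbb{Z}_2,\mathbb{Z}_3)$ of smooth vector fields along $\gamma$ whose first vector is $\mathbb{T}$; it is identified with the smooth map $\mathbb{Z}: I\to O(4)$ whose rows are these vectors. Its coefficient matrix is the $\mathfrak{o}(4)$-valued function $X$ with $\mathbb{Z}'=X\mathbb{Z}$. A frame is of type D if, after possibly permuting $\mathbb{Z}_1,\mathbb{Z}_2,\mathbb{Z}_3$ (keeping $\mathbb{T}$ first), its coefficient matrix has the form $\begin{pmatrix}0&x_1&0&0\\-x_1&0&x_2&x_3\\0&-x_2&0&0\\0&-x_3&0&0\end{pmatrix}$ for some smooth functions $x_1,x_2,x_3$. *)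

theory Defs
  imports "HOL-Analysis.Analysis"
begin

definition smooth_on_real :: "real set \<Rightarrow> (real \<Rightarrow> 'a::real_normed_vector) \<Rightarrow> bool" where
  "smooth_on_real I f \<longleftrightarrow>
     (\<exists>D :: nat \<Rightarrow> real \<Rightarrow> 'a. D 0 = f \<and>
        (\<forall>n. \<forall>t\<in>I. (D n has_vector_derivative D (Suc n) t) (at t)))"

definition open_interval :: "real set \<Rightarrow> bool" where
  "open_interval I \<longleftrightarrow> is_interval I \<and> open I \<and> I \<noteq> {}"

definition tangent :: "(real \<Rightarrow> real^4) \<Rightarrow> real \<Rightarrow> real^4" where
  "tangent \<gamma> t = vector_derivative \<gamma> (at t)"

definition arclength_curve :: "real set \<Rightarrow> (real \<Rightarrow> real^4) \<Rightarrow> bool" where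
  "arclength_curve I \<gamma> \<longleftrightarrow> smooth_on_real I \<gamma> \<and> (\<forall>t\<in>I. norm (tangent \<gamma> t) = 1)"

text \<open>A frame on gamma: smooth map Z into O(4) whose rows are (T, Z1, Z2, Z3).\<close>
definition is_frame :: "real set \<Rightarrow> (real \<Rightarrow> real^4) \<Rightarrow> (real \<Rightarrow> real^4^4) \<Rightarrow> bool" where
  "is_frame I \<gamma> Z \<longleftrightarrow> smooth_on_real I Z \<and>
     (\<forall>t\<in>I. orthogonal_matrix (Z t) \<and> Z t $ 1 = tangent \<gamma> t)"

text \<open>Coefficient matrix X with Z' = X Z, i.e. X = Z' Z^T (Z orthogonal).\<close>
definition coeff_matrix :: "(real \<Rightarrow> real^4^4) \<Rightarrow> real \<Rightarrow> real^4^4" where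
  "coeff_matrix Z t = vector_derivative Z (at t) ** transpose (Z t)"

definition typeD_matrix :: "real \<Rightarrow> real \<Rightarrow> real \<Rightarrow> real^4^4" where
  "typeD_matrix x1 x2 x3 = vector [vector [0, x1, 0, 0],
                                   vector [-x1, 0, x2, x3],
                                   vector [0, -x2, 0, 0],
                                   vector [0, -x3, 0, 0]]"

text \<open>Frame of type D: after permuting Z1,Z2,Z3 (keeping T first, i.e. a permutation
  p of the row indices with p 1 = 1) the coefficient matrix has the type D form.
  Permuting the rows by p turns the coefficient matrix X into (X (p i) (p j)).\<close>
definition frame_typeD :: "real set \<Rightarrow> (real \<Rightarrow> real^4) \<Rightarrow> (real \<Rightarrow> real^4^4) \<Rightarrow> bool" where
  "frame_typeD I \<gamma> Z \<longleftrightarrow> is_frame I \<gamma> Z \<and>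
     (\<exists>p :: 4 \<Rightarrow> 4. p permutes UNIV \<and> p 1 = 1 \<and>
       (\<exists>x1 x2 x3 :: real \<Rightarrow> real.
          smooth_on_real I x1 \<and> smooth_on_real I x2 \<and> smooth_on_real I x3 \<and>
          (\<forall>t\<in>I. (\<chi> i j. coeff_matrix Z t $ p i $ p j) = typeD_matrix (x1 t) (x2 t) (x3 t))))"

end

theory Submission
  imports Defs
begin

primrec Cn :: "nat \<Rightarrow> real set \<Rightarrow> (real \<Rightarrow> 'a::real_normed_vector) \<Rightarrow> bool" where
  "Cn 0 I f = True"
| "Cn (Suc n) I f = (\<exists>g. (\<forall>t\<in>I. (f has_vector_derivative g t) (at t)) \<and> Cn n I g)"

definition sm :: "real set \<Rightarrow> (real \<Rightarrow> 'a::real_normed_vector) \<Rightarrow> bool" where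
  "sm I f \<longleftrightarrow> (\<forall>n. Cn n I f)"

lemma Cn_SucI:
  "(\<And>t. t \<in> I \<Longrightarrow> (f has_vector_derivative g t) (at t)) \<Longrightarrow> Cn n I g \<Longrightarrow> Cn (Suc n) I f"
  by (simp only: Cn.simps) (intro exI[of _ g] conjI ballI; assumption?)

lemma Cn_SucE:
  assumes "Cn (Suc n) I f"
  obtains g where "\<And>t. t \<in> I \<Longrightarrow> (f has_vector_derivative g t) (at t)" "Cn n I g"
proof -
  from assms obtain g where g: "\<forall>t\<in>I. (f has_vector_derivative g t) (at t)" "Cn n I g"
    by (simp only: Cn.simps) (elim exE conjE)
  show thesis by (rule that[of g]) (use g in auto)
qed

lemma Cn_mono: "Cn (Suc n) I f \<Longrightarrow> Cn n I f"
proof (induction n arbitrary: f)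
  case 0 then show ?case by simp
next
  case (Suc n)
  obtain g where g: "\<And>t. t \<in> I \<Longrightarrow> (f has_vector_derivative g t) (at t)" "Cn (Suc n) I g"
    by (rule Cn_SucE[OF Suc.prems]) blast
  show ?case by (rule Cn_SucI[OF g(1) Suc.IH[OF g(2)]])
qed

lemma Cn_cong:
  assumes "open I" "Cn n I f" "\<And>t. t \<in> I \<Longrightarrow> f t = g t"
  shows "Cn n I g"
  using assms(2,3)
proof (induction n arbitrary: f g)
  case 0 then show ?case by simp
next
  case (Suc n)
  obtain h where h: "\<And>t. t \<in> I \<Longrightarrow> (f has_vector_derivative h t) (at t)" "Cn n I h"
    by (rule Cn_SucE[OF Suc.prems(1)]) blast
  have "(g has_vector_derivative h t) (at t)" if "t \<in> I" for t
    by (rule has_vector_derivative_transform_within_open[OF h(1)[OF that] assms(1) that]) (simp add: Suc.prems(2))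
  then show ?case using h(2) Cn_SucI by blast
qed

lemma sm_cong: "open I \<Longrightarrow> sm I f \<Longrightarrow> (\<And>t. t \<in> I \<Longrightarrow> f t = g t) \<Longrightarrow> sm I g"
  unfolding sm_def using Cn_cong by blast

lemma smooth_imp_sm:
  assumes "smooth_on_real I f" shows "sm I f"
proof -
  obtain D where D: "D 0 = f" "\<And>n. \<forall>t\<in>I. (D n has_vector_derivative D (Suc n) t) (at t)"
    using assms unfolding smooth_on_real_def by blast
  have "\<forall>m. Cn n I (D m)" for n
  proof (induction n)
    case (Suc n)
    show ?case
    proof
      fix m show "Cn (Suc n) I (D m)"
        by (rule Cn_SucI[of I "D m" "D (Suc m)"]) (use D(2) Suc.IH in auto)
    qed
  qed simp
  then show ?thesis unfolding sm_def using D(1) by metis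
qed

lemma sm_step:
  assumes "open I" "sm I f"
  shows "(\<forall>t\<in>I. (f has_vector_derivative vector_derivative f (at t)) (at t)) \<and>
         sm I (\<lambda>t. vector_derivative f (at t))"
proof
  obtain g where g: "\<And>t. t \<in> I \<Longrightarrow> (f has_vector_derivative g t) (at t)"
    by (rule Cn_SucE[OF assms(2)[unfolded sm_def, rule_format, of "Suc 0"]]) blast
  have eq: "vector_derivative f (at t) = g t" if "t \<in> I" for t
    by (rule vector_derivative_at[OF g[OF that]])
  show "\<forall>t\<in>I. (f has_vector_derivative vector_derivative f (at t)) (at t)"
    using g eq by simp
  show "sm I (\<lambda>t. vector_derivative f (at t))"
    unfolding sm_def
  proof
    fix n
    obtain h where h: "\<And>t. t \<in> I \<Longrightarrow> (f has_vector_derivative h t) (at t)" "Cn n I h"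
      by (rule Cn_SucE[OF assms(2)[unfolded sm_def, rule_format, of "Suc n"]]) blast
    have "h t = vector_derivative f (at t)" if "t \<in> I" for t
      by (rule vector_derivative_at[OF h(1)[OF that], symmetric])
    then show "Cn n I (\<lambda>t. vector_derivative f (at t))"
      by (rule Cn_cong[OF assms(1) h(2)])
  qed
qed

lemma sm_imp_smooth:
  assumes "open I" "sm I f" shows "smooth_on_real I f"
proof -
  define D where "D n = ((\<lambda>g t. vector_derivative g (at t)) ^^ n) f" for n
  have DS: "D (Suc n) = (\<lambda>t. vector_derivative (D n) (at t))" for n by (simp add: D_def)
  have smD: "sm I (D n)" for n
  proof (induction n)
    case 0 then show ?case using assms(2) by (simp add: D_def)
  next
    case (Suc n)
    then show ?case unfolding DS using sm_step[OF assms(1) Suc] by blast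
  qed
  have "\<forall>t\<in>I. (D n has_vector_derivative D (Suc n) t) (at t)" for n
    unfolding DS using sm_step[OF assms(1) smD[of n]] by blast
  moreover have "D 0 = f" by (simp add: D_def)
  ultimately show ?thesis unfolding smooth_on_real_def by (intro exI[of _ D]) blast
qed

lemma smooth_iff_sm: "open I \<Longrightarrow> smooth_on_real I f \<longleftrightarrow> sm I f"
  using smooth_imp_sm sm_imp_smooth by blast

lemma sm_deriv_intro:
  assumes "\<And>t. t \<in> I \<Longrightarrow> (f has_vector_derivative g t) (at t)" "sm I g"
  shows "sm I f"
  unfolding sm_def
proof
  fix n show "Cn n I f"
  proof (cases n)
    case (Suc m) then show ?thesis using assms unfolding sm_def by (metis Cn_SucI)
  qed simp
qed

lemma Cn_const: "Cn n I (\<lambda>t. c::'a::real_normed_vector)"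
proof (induction n arbitrary: c)
  case (Suc n)
  show ?case
    by (rule Cn_SucI[of I _ "\<lambda>t. 0"]) (use Suc.IH in \<open>auto intro: derivative_eq_intros\<close>)
qed simp

lemma sm_const: "sm I (\<lambda>t. c)" unfolding sm_def using Cn_const by blast

lemma Cn_add: "Cn n I f \<Longrightarrow> Cn n I g \<Longrightarrow> Cn n I (\<lambda>t. f t + g t)"
proof (induction n arbitrary: f g)
  case (Suc n)
  obtain f' where f': "\<And>t. t \<in> I \<Longrightarrow> (f has_vector_derivative f' t) (at t)" "Cn n I f'"
    by (rule Cn_SucE[OF Suc.prems(1)]) blast
  obtain g' where g': "\<And>t. t \<in> I \<Longrightarrow> (g has_vector_derivative g' t) (at t)" "Cn n I g'"
    by (rule Cn_SucE[OF Suc.prems(2)]) blast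
  show ?case
  proof (rule Cn_SucI[of I _ "\<lambda>t. f' t + g' t"])
    show "((\<lambda>t. f t + g t) has_vector_derivative f' t + g' t) (at t)" if "t \<in> I" for t
      using f'(1)[OF that] g'(1)[OF that] by (rule has_vector_derivative_add)
    show "Cn n I (\<lambda>t. f' t + g' t)" using Suc.IH f'(2) g'(2) by blast
  qed
qed simp

lemma sm_add: "sm I f \<Longrightarrow> sm I g \<Longrightarrow> sm I (\<lambda>t. f t + g t)"
  unfolding sm_def using Cn_add by blast

lemma Cn_linear: "bounded_linear L \<Longrightarrow> Cn n I f \<Longrightarrow> Cn n I (\<lambda>t. L (f t))"
proof (induction n arbitrary: f)
  case (Suc n)
  obtain f' where f': "\<And>t. t \<in> I \<Longrightarrow> (f has_vector_derivative f' t) (at t)" "Cn n I f'"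
    by (rule Cn_SucE[OF Suc.prems(2)]) blast
  show ?case
  proof (rule Cn_SucI[of I _ "\<lambda>t. L (f' t)"])
    show "((\<lambda>t. L (f t)) has_vector_derivative L (f' t)) (at t)" if "t \<in> I" for t
      by (rule bounded_linear.has_vector_derivative[OF Suc.prems(1) f'(1)[OF that]])
    show "Cn n I (\<lambda>t. L (f' t))" using Suc.IH Suc.prems(1) f'(2) by blast
  qed
qed simp

lemma sm_linear: "bounded_linear L \<Longrightarrow> sm I f \<Longrightarrow> sm I (\<lambda>t. L (f t))"
  unfolding sm_def using Cn_linear by metis

lemma Cn_bilinear:
  fixes prod :: "'a::real_normed_vector \<Rightarrow> 'b::real_normed_vector \<Rightarrow> 'c::real_normed_vector"
    and f :: "real \<Rightarrow> 'a" and g :: "real \<Rightarrow> 'b"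
  assumes bb: "bounded_bilinear prod"
  shows "Cn n I f \<Longrightarrow> Cn n I g \<Longrightarrow> Cn n I (\<lambda>t. prod (f t) (g t))"
proof (induction n arbitrary: f g)
  case (Suc n)
  obtain f' where f': "\<And>t. t \<in> I \<Longrightarrow> (f has_vector_derivative f' t) (at t)" "Cn n I f'"
    by (rule Cn_SucE[OF Suc.prems(1)]) blast
  obtain g' where g': "\<And>t. t \<in> I \<Longrightarrow> (g has_vector_derivative g' t) (at t)" "Cn n I g'"
    by (rule Cn_SucE[OF Suc.prems(2)]) blast
  show ?case
  proof (rule Cn_SucI[of I _ "\<lambda>t. prod (f t) (g' t) + prod (f' t) (g t)"])
    show "((\<lambda>t. prod (f t) (g t)) has_vector_derivative prod (f t) (g' t) + prod (f' t) (g t)) (at t)"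
      if "t \<in> I" for t
      using bounded_bilinear.has_vector_derivative[OF bb f'(1)[OF that] g'(1)[OF that]] .
    have "Cn n I f" "Cn n I g" using Suc.prems Cn_mono by blast+
    then show "Cn n I (\<lambda>t. prod (f t) (g' t) + prod (f' t) (g t))"
      using Suc.IH f'(2) g'(2) Cn_add by blast
  qed
qed simp

lemma sm_bilinear:
  fixes prod :: "'a::real_normed_vector \<Rightarrow> 'b::real_normed_vector \<Rightarrow> 'c::real_normed_vector"
    and f :: "real \<Rightarrow> 'a" and g :: "real \<Rightarrow> 'b"
  assumes bb: "bounded_bilinear prod" and "sm I f" "sm I g"
  shows "sm I (\<lambda>t. prod (f t) (g t))"
  unfolding sm_def
proof
  fix n
  have "Cn n I f" "Cn n I g" using assms unfolding sm_def by auto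
  then show "Cn n I (\<lambda>t. prod (f t) (g t))" by (rule Cn_bilinear[OF bb])
qed

lemma sm_scaleR: "sm I f \<Longrightarrow> sm I g \<Longrightarrow> sm I (\<lambda>t. f t *\<^sub>R g t)"
  by (rule sm_bilinear[OF bounded_bilinear_scaleR])

lemma sm_mult: "sm I f \<Longrightarrow> sm I g \<Longrightarrow> sm I (\<lambda>t. f t * (g t :: real))"
  by (rule sm_bilinear[OF bounded_bilinear_mult])

lemma sm_inner: fixes f g :: "real \<Rightarrow> 'a::real_inner" shows "sm I f \<Longrightarrow> sm I g \<Longrightarrow> sm I (\<lambda>t. inner (f t) (g t))"
  by (rule sm_bilinear[OF bounded_bilinear_inner])

lemma sm_minus: "sm I f \<Longrightarrow> sm I (\<lambda>t. - f t)"
  by (rule sm_linear[OF bounded_linear_minus[OF bounded_linear_ident]])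

lemma sm_nth: "sm I f \<Longrightarrow> sm I (\<lambda>t. f t $ i)"
  by (rule sm_linear[OF bounded_linear_vec_nth])

lemma cmp_right:
  fixes g g' :: "real \<Rightarrow> 'a::real_inner"
  assumes "t0 \<le> t" "g t0 = 0"
    and der: "\<And>s. s \<in> {t0..t} \<Longrightarrow> (g has_vector_derivative g' s) (at s)"
    and bnd: "\<And>s. s \<in> {t0..t} \<Longrightarrow> norm (g' s) \<le> c * (s - t0) ^ k"
  shows "norm (g t) \<le> c * (t - t0) ^ Suc k / Suc k"
proof -
  define e where "e = g t"
  define \<phi> where "\<phi> s = c * (s - t0) ^ Suc k / Suc k * norm e - g s \<bullet> e" for s
  have d\<phi>: "(\<phi> has_real_derivative (c * (s - t0) ^ k * norm e - g' s \<bullet> e)) (at s)"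
    if "s \<in> {t0..t}" for s
  proof -
    have dg: "((\<lambda>s. g s \<bullet> e) has_real_derivative g' s \<bullet> e) (at s)"
      using bounded_linear.has_vector_derivative[OF bounded_linear_inner_left der[OF that]]
      by (simp add: has_real_derivative_iff_has_vector_derivative)
    show ?thesis unfolding \<phi>_def
      by (rule derivative_eq_intros dg refl | simp)+
  qed
  have "\<phi> t0 \<le> \<phi> t"
  proof (rule deriv_nonneg_imp_mono[OF d\<phi> _ assms(1)])
    fix s assume s: "s \<in> {t0..t}"
    have "g' s \<bullet> e \<le> norm (g' s) * norm e" by (rule norm_cauchy_schwarz)
    also have "\<dots> \<le> c * (s - t0) ^ k * norm e" by (rule mult_right_mono[OF bnd[OF s]]) simp
    finally show "0 \<le> c * (s - t0) ^ k * norm e - g' s \<bullet> e" by simp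
  qed simp
  then have "norm e * norm e \<le> c * (t - t0) ^ Suc k / Suc k * norm e"
    using assms(2) by (simp add: \<phi>_def e_def power2_norm_eq_inner[symmetric] power2_eq_square)
  moreover have "0 \<le> c * (t - t0) ^ Suc k / Suc k"
  proof -
    have "0 \<le> c * (t - t0) ^ k" using bnd[of t] assms(1) norm_ge_zero[of "g' t"] by (meson atLeastAtMost_iff order.refl order_trans)
    then have "0 \<le> (c * (t - t0) ^ k) * (t - t0)" using assms(1) by simp
    then show ?thesis by (simp add: algebra_simps)
  qed
  ultimately show ?thesis unfolding e_def[symmetric]
    by (smt (verit) mult_le_cancel_right norm_ge_zero)
qed

lemma cmp_left:
  fixes g g' :: "real \<Rightarrow> 'a::real_inner"
  assumes "t \<le> t0" "g t0 = 0"
    and der: "\<And>s. s \<in> {t..t0} \<Longrightarrow> (g has_vector_derivative g' s) (at s)"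
    and bnd: "\<And>s. s \<in> {t..t0} \<Longrightarrow> norm (g' s) \<le> c * (t0 - s) ^ k"
  shows "norm (g t) \<le> c * (t0 - t) ^ Suc k / Suc k"
proof -
  define e where "e = g t"
  define \<phi> where "\<phi> s = c * (t0 - s) ^ Suc k / Suc k * norm e - g s \<bullet> e" for s
  have d\<phi>: "(\<phi> has_real_derivative (- c * (t0 - s) ^ k * norm e - g' s \<bullet> e)) (at s)"
    if "s \<in> {t..t0}" for s
  proof -
    have dg: "((\<lambda>s. g s \<bullet> e) has_real_derivative g' s \<bullet> e) (at s)"
      using bounded_linear.has_vector_derivative[OF bounded_linear_inner_left der[OF that]]
      by (simp add: has_real_derivative_iff_has_vector_derivative)
    show ?thesis unfolding \<phi>_def
      by (rule derivative_eq_intros dg refl | simp)+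
  qed
  have "\<phi> t0 \<le> \<phi> t"
  proof (rule deriv_nonpos_imp_antimono[OF d\<phi> _ assms(1)])
    fix s assume s: "s \<in> {t..t0}"
    have "- (g' s \<bullet> e) \<le> norm (g' s) * norm e"
      using Cauchy_Schwarz_ineq2[of "g' s" e] by simp
    also have "\<dots> \<le> c * (t0 - s) ^ k * norm e" by (rule mult_right_mono[OF bnd[OF s]]) simp
    finally show "- c * (t0 - s) ^ k * norm e - g' s \<bullet> e \<le> 0" by simp
  qed simp
  then have "norm e * norm e \<le> c * (t0 - t) ^ Suc k / Suc k * norm e"
    using assms(2) by (simp add: \<phi>_def e_def power2_norm_eq_inner[symmetric] power2_eq_square)
  moreover have "0 \<le> c * (t0 - t) ^ Suc k / Suc k"
  proof -
    have "0 \<le> c * (t0 - t) ^ k" using bnd[of t] assms(1) norm_ge_zero[of "g' t"] by (meson atLeastAtMost_iff order.refl order_trans)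
    then have "0 \<le> (c * (t0 - t) ^ k) * (t0 - t)" using assms(1) by simp
    then show ?thesis by (simp add: algebra_simps)
  qed
  ultimately show ?thesis unfolding e_def[symmetric]
    by (smt (verit) mult_le_cancel_right norm_ge_zero)
qed

lemma cmp:
  fixes g g' :: "real \<Rightarrow> 'a::real_inner"
  assumes "g t0 = 0" "t \<in> {a..b}" "t0 \<in> {a..b}"
    and der: "\<And>s. s \<in> {a..b} \<Longrightarrow> (g has_vector_derivative g' s) (at s)"
    and bnd: "\<And>s. s \<in> {a..b} \<Longrightarrow> norm (g' s) \<le> c * \<bar>s - t0\<bar> ^ k"
  shows "norm (g t) \<le> c * \<bar>t - t0\<bar> ^ Suc k / Suc k"
proof (cases "t0 \<le> t")
  case True
  have "norm (g t) \<le> c * (t - t0) ^ Suc k / Suc k"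
  proof (rule cmp_right[of t0 t g, OF True assms(1)])
    fix s assume s: "s \<in> {t0..t}"
    then have sab: "s \<in> {a..b}" using assms(2,3) by auto
    show "(g has_vector_derivative g' s) (at s)" by (rule der[OF sab])
    have "\<bar>s - t0\<bar> = s - t0" using s by simp
    then show "norm (g' s) \<le> c * (s - t0) ^ k" using bnd[OF sab] by simp
  qed
  then show ?thesis using True by simp
next
  case False
  have "norm (g t) \<le> c * (t0 - t) ^ Suc k / Suc k"
  proof (rule cmp_left[of t t0 g, OF _ assms(1)])
    show "t \<le> t0" using False by simp
    fix s assume s: "s \<in> {t..t0}"
    then have sab: "s \<in> {a..b}" using assms(2,3) by auto
    show "(g has_vector_derivative g' s) (at s)" by (rule der[OF sab])
    have "\<bar>s - t0\<bar> = t0 - s" using s by simp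
    then show "norm (g' s) \<le> c * (t0 - s) ^ k" using bnd[OF sab] by simp
  qed
  moreover have eq: "\<bar>t - t0\<bar> = t0 - t" using False by auto
  ultimately show ?thesis unfolding eq by blast
qed

lemma get_ab:
  assumes "open_interval I" "x \<in> I" "y \<in> I"
  obtains a b where "a < x" "a < y" "x < b" "y < b" "{a..b} \<subseteq> I"
proof -
  have oI: "open I" and iI: "is_interval I" using assms(1) by (auto simp: open_interval_def)
  obtain e1 where e1: "e1 > 0" "ball x e1 \<subseteq> I" using oI assms(2) open_contains_ball by blast
  obtain e2 where e2: "e2 > 0" "ball y e2 \<subseteq> I" using oI assms(3) open_contains_ball by blast
  define e where "e = min e1 e2 / 2"
  have e: "e > 0" "e < e1" "e < e2" using e1 e2 by (auto simp: e_def)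
  define a where "a = min x y - e"
  define b where "b = max x y + e"
  have "a \<in> I"
  proof (cases "x \<le> y")
    case True then have "a \<in> ball x e1" using e by (auto simp: a_def dist_real_def)
    then show ?thesis using e1 by auto
  next
    case False then have "a \<in> ball y e2" using e by (auto simp: a_def dist_real_def)
    then show ?thesis using e2 by auto
  qed
  moreover have "b \<in> I"
  proof (cases "x \<le> y")
    case True then have "b \<in> ball y e2" using e by (auto simp: b_def dist_real_def)
    then show ?thesis using e2 by auto
  next
    case False then have "b \<in> ball x e1" using e by (auto simp: b_def dist_real_def)
    then show ?thesis using e1 by auto
  qed
  ultimately have sub: "{a..b} \<subseteq> I"
  proof (intro subsetI)
    fix s assume "a \<in> I" "b \<in> I" "s \<in> {a..b}"
    then show "s \<in> I" using iI[unfolded is_interval_1, rule_format, of a b s] by auto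
  qed
  have "a < x" "a < y" "x < b" "y < b" using e by (auto simp: a_def b_def)
  then show ?thesis using sub by (rule that)
qed

lemma antider:
  fixes f :: "real \<Rightarrow> 'a::euclidean_space"
  assumes I: "open_interval I" and "t0 \<in> I" "continuous_on I f" "t \<in> I"
  shows "((\<lambda>t. LBINT s=t0..t. f s) has_vector_derivative f t) (at t)"
proof -
  obtain a b where ab: "a < t" "a < t0" "t < b" "t0 < b" "{a..b} \<subseteq> I"
    by (rule get_ab[OF I assms(4) assms(2)])
  have cf: "continuous_on {a..b} f" by (rule continuous_on_subset[OF assms(3) ab(5)])
  have "((\<lambda>t. LBINT s=t0..t. f s) has_vector_derivative f t) (at t within {a..b})"
    by (rule interval_integral_FTC2[OF _ _ cf]) (use ab(1-4) in linarith)+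
  then have "((\<lambda>t. LBINT s=t0..t. f s) has_vector_derivative f t) (at t within {a<..<b})"
    by (rule has_vector_derivative_within_subset) (rule greaterThanLessThan_subseteq_atLeastAtMost_iff[THEN iffD2], simp)
  moreover have "t \<in> {a<..<b}" using ab(1,3) by simp
  ultimately show ?thesis by (simp add: at_within_open[OF _ open_greaterThanLessThan])
qed

lemma bound_above:
  fixes f :: "real \<Rightarrow> real"
  assumes "continuous_on {a..b} f" "a \<le> b"
  obtains M where "M \<ge> 0" "\<And>s. s \<in> {a..b} \<Longrightarrow> f s \<le> M"
proof -
  obtain x where x: "x \<in> {a..b}" "\<forall>y\<in>{a..b}. f y \<le> f x"
    using continuous_attains_sup[OF compact_Icc _ assms(1)] assms(2) by auto
  show ?thesis
  proof (rule that[of "max 0 (f x)"])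
    fix s assume "s \<in> {a..b}" then show "f s \<le> max 0 (f x)" using x(2) by force
  qed simp
qed

lemma linear_ode:
  fixes u v w z :: "real \<Rightarrow> 'a::euclidean_space" and y0 :: 'a
  assumes I: "open_interval I" and t0: "t0 \<in> I"
    and cu: "continuous_on I u" and cv: "continuous_on I v"
    and cw: "continuous_on I w" and cz: "continuous_on I z"
  shows "\<exists>Y. Y t0 = y0 \<and>
    (\<forall>t\<in>I. (Y has_vector_derivative ((Y t \<bullet> u t) *\<^sub>R v t + (Y t \<bullet> w t) *\<^sub>R z t)) (at t))"
proof -
  define L where "L t y = (y \<bullet> u t) *\<^sub>R v t + (y \<bullet> w t) *\<^sub>R z t" for t y
  define K where "K t = norm (u t) * norm (v t) + norm (w t) * norm (z t)" for t
  have Ldiff: "L t x - L t y = L t (x - y)" for t x y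
    by (simp add: L_def inner_diff_left scaleR_left_diff_distrib algebra_simps)
  have Lb: "norm (L t y) \<le> K t * norm y" for t y
  proof -
    have "norm (L t y) \<le> norm ((y \<bullet> u t) *\<^sub>R v t) + norm ((y \<bullet> w t) *\<^sub>R z t)"
      unfolding L_def by (rule norm_triangle_ineq)
    also have "\<dots> = \<bar>y \<bullet> u t\<bar> * norm (v t) + \<bar>y \<bullet> w t\<bar> * norm (z t)" by simp
    also have "\<dots> \<le> (norm y * norm (u t)) * norm (v t) + (norm y * norm (w t)) * norm (z t)"
      by (intro add_mono mult_right_mono Cauchy_Schwarz_ineq2) simp_all
    also have "\<dots> = K t * norm y" by (simp add: K_def algebra_simps)
    finally show ?thesis .
  qed
  have contL: "continuous_on I (\<lambda>s. L s (Y s))" if "continuous_on I Y" for Y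
    unfolding L_def by (intro continuous_intros cu cv cw cz that)
  have contK: "continuous_on I K" unfolding K_def by (intro continuous_intros cu cv cw cz)
  define P where "P = rec_nat (\<lambda>t. y0) (\<lambda>k Pk t. y0 + (LBINT s=t0..t. L s (Pk s)))"
  have P0: "P 0 = (\<lambda>t. y0)" by (simp add: P_def)
  have PS: "P (Suc k) = (\<lambda>t. y0 + (LBINT s=t0..t. L s (P k s)))" for k by (simp add: P_def)
  have derP': "(P (Suc k) has_vector_derivative L t (P k t)) (at t)"
    if "t \<in> I" "continuous_on I (P k)" for k t
  proof -
    have "((\<lambda>t. y0 + (LBINT s=t0..t. L s (P k s))) has_vector_derivative 0 + L t (P k t)) (at t)"
      by (rule has_vector_derivative_add[OF has_vector_derivative_const antider[OF I t0 contL[OF that(2)] that(1)]])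
    then show ?thesis unfolding PS by simp
  qed
  have contP: "continuous_on I (P k)" for k
  proof (induction k)
    case 0 show ?case unfolding P0 by (rule continuous_on_const)
  next
    case (Suc k)
    show ?case
      by (intro continuous_at_imp_continuous_on ballI has_vector_derivative_continuous[OF derP'[OF _ Suc.IH]])
  qed
  have derP: "(P (Suc k) has_vector_derivative L t (P k t)) (at t)" if "t \<in> I" for k t
    by (rule derP'[OF that contP])
  have Pt0: "P k t0 = y0" for k by (cases k) (simp_all add: P0 PS)
  define Y where "Y t = y0 + (\<Sum>i. P (Suc i) t - P i t)" for t
  have "Y t0 = y0" by (simp add: Y_def Pt0)
  moreover have "(Y has_vector_derivative L t (Y t)) (at t)" if tI: "t \<in> I" for t
  proof -
    obtain a b where ab: "a < t" "a < t0" "t < b" "t0 < b" "{a..b} \<subseteq> I"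
      by (rule get_ab[OF I tI t0])
    have aleb: "a \<le> b" using ab by simp
    obtain M where M: "M \<ge> 0" "\<And>s. s \<in> {a..b} \<Longrightarrow> K s \<le> M"
      by (rule bound_above[OF continuous_on_subset[OF contK ab(5)] aleb]) blast
    have "continuous_on I (\<lambda>s. norm (L s y0))"
      by (intro continuous_intros contL)
    then obtain C where C: "C \<ge> 0" "\<And>s. s \<in> {a..b} \<Longrightarrow> norm (L s y0) \<le> C"
      by (rule bound_above[OF continuous_on_subset[OF _ ab(5)] aleb]) blast
    have t0ab: "t0 \<in> {a..b}" using ab by simp
    have bnd: "\<forall>s\<in>{a..b}. norm (P (Suc k) s - P k s) \<le> C * M^k * \<bar>s - t0\<bar>^(Suc k) / fact (Suc k)" for k
    proof (induction k)
      case 0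
      have "norm (P (Suc 0) s - P 0 s) \<le> C * \<bar>s - t0\<bar>^(Suc 0) / Suc 0" if s: "s \<in> {a..b}" for s
      proof (rule cmp[of "\<lambda>s. P (Suc 0) s - P 0 s" t0 s a b "\<lambda>s. L s y0" C 0])
        show "P (Suc 0) t0 - P 0 t0 = 0" by (simp add: Pt0)
        show "s \<in> {a..b}" by (rule s)
        show "t0 \<in> {a..b}" by (rule t0ab)
        fix r assume r: "r \<in> {a..b}"
        then have rI: "r \<in> I" using ab(5) by auto
        have "((\<lambda>s. P (Suc 0) s - P 0 s) has_vector_derivative L r (P 0 r) - 0) (at r)"
          by (rule has_vector_derivative_diff[OF derP[OF rI]]) (simp add: P0)
        then show "((\<lambda>s. P (Suc 0) s - P 0 s) has_vector_derivative L r y0) (at r)"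
          by (simp add: P0)
        show "norm (L r y0) \<le> C * \<bar>r - t0\<bar> ^ 0" using C(2)[OF r] by simp
      qed
      then show ?case by simp
    next
      case (Suc k)
      define c where "c = C * M ^ Suc k / fact (Suc k)"
      have "norm (P (Suc (Suc k)) s - P (Suc k) s) \<le> c * \<bar>s - t0\<bar>^(Suc (Suc k)) / Suc (Suc k)"
        if s: "s \<in> {a..b}" for s
      proof (rule cmp[of "\<lambda>s. P (Suc (Suc k)) s - P (Suc k) s" t0 s a b
            "\<lambda>s. L s (P (Suc k) s) - L s (P k s)" c "Suc k"])
        show "P (Suc (Suc k)) t0 - P (Suc k) t0 = 0" by (simp add: Pt0)
        show "s \<in> {a..b}" by (rule s)
        show "t0 \<in> {a..b}" by (rule t0ab)
        fix r assume r: "r \<in> {a..b}"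
        then have rI: "r \<in> I" using ab(5) by auto
        show "((\<lambda>s. P (Suc (Suc k)) s - P (Suc k) s) has_vector_derivative L r (P (Suc k) r) - L r (P k r)) (at r)"
          by (rule has_vector_derivative_diff[OF derP[OF rI] derP[OF rI]])
        have "norm (L r (P (Suc k) r) - L r (P k r)) = norm (L r (P (Suc k) r - P k r))"
          by (simp add: Ldiff)
        also have "\<dots> \<le> K r * norm (P (Suc k) r - P k r)" by (rule Lb)
        also have "\<dots> \<le> M * (C * M^k * \<bar>r - t0\<bar>^(Suc k) / fact (Suc k))"
          by (rule mult_mono[OF M(2)[OF r] Suc.IH[rule_format, OF r] M(1) norm_ge_zero])
        also have "\<dots> = c * \<bar>r - t0\<bar> ^ Suc k" by (simp add: c_def)
        finally show "norm (L r (P (Suc k) r) - L r (P k r)) \<le> c * \<bar>r - t0\<bar> ^ Suc k" .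
      qed
      moreover have "c * \<bar>s - t0\<bar>^(Suc (Suc k)) / Suc (Suc k) =
          C * M ^ Suc k * \<bar>s - t0\<bar> ^ Suc (Suc k) / fact (Suc (Suc k))" for s
        unfolding c_def by (simp add: fact_Suc[of "Suc k"] field_simps del: fact_Suc)
      ultimately show ?case by simp
    qed
    define \<delta> where "\<delta> = b - a"
    define B where "B k = C * \<delta> * ((M * \<delta>) ^ k /\<^sub>R fact k)" for k
    have bndB: "norm (P (Suc k) s - P k s) \<le> B k" if s: "s \<in> {a..b}" for k s
    proof -
      have d: "\<bar>s - t0\<bar> \<le> \<delta>" using s t0ab by (auto simp: \<delta>_def)
      have "C * M^k * \<bar>s - t0\<bar>^(Suc k) / fact (Suc k) \<le> C * M^k * \<delta>^(Suc k) / fact (Suc k)"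
        by (intro divide_right_mono mult_left_mono power_mono d) (use C(1) M(1) in auto)
      also have "\<dots> \<le> C * M^k * \<delta>^(Suc k) / fact k"
        by (intro divide_left_mono mult_nonneg_nonneg zero_le_power fact_mono) (use C(1) M(1) d in auto)
      also have "\<dots> = B k" by (simp add: B_def power_mult_distrib field_simps)
      finally show ?thesis using bnd[of k, rule_format, OF s] by linarith
    qed
    have sB: "summable B" unfolding B_def
      by (intro summable_mult summable_exp_generic)
    have ul: "uniform_limit {a..b} (\<lambda>n s. \<Sum>i<n. P (Suc i) s - P i s) (\<lambda>s. \<Sum>i. P (Suc i) s - P i s) sequentially"
      by (rule Weierstrass_m_test_ev[OF _ sB]) (use bndB in \<open>auto intro!: always_eventually\<close>)
    have tele: "(\<Sum>i<n. P (Suc i) s - P i s) = P n s - y0" for n s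
      using sum_lessThan_telescope[of "\<lambda>i. P i s" n] by (simp add: P0)
    have Ylim: "(\<lambda>n. P n s) \<longlonglongrightarrow> Y s" if "s \<in> {a..b}" for s
    proof -
      have "(\<lambda>n. P n s - y0) \<longlonglongrightarrow> (\<Sum>i. P (Suc i) s - P i s)"
        using tendsto_uniform_limitI[OF ul that] by (simp add: tele)
      then have "(\<lambda>n. (P n s - y0) + y0) \<longlonglongrightarrow> (\<Sum>i. P (Suc i) s - P i s) + y0"
        by (rule tendsto_add[OF _ tendsto_const])
      then show ?thesis by (simp add: Y_def add.commute)
    qed
    have unif: "\<forall>\<^sub>F n in sequentially. \<forall>s\<in>{a..b}. norm (P n s - Y s) < e" if "e > 0" for e
      using uniform_limitD[OF ul that]
      by (rule eventually_mono) (simp add: dist_norm tele Y_def algebra_simps)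
    have "\<exists>g. \<forall>x\<in>{a<..<b}. (\<lambda>n. P (Suc n) x) \<longlonglongrightarrow> g x \<and>
        (g has_derivative (\<lambda>h. h *\<^sub>R L x (Y x))) (at x within {a<..<b})"
    proof (rule has_derivative_sequence[where f = "\<lambda>n. P (Suc n)" and f' = "\<lambda>n x h. h *\<^sub>R L x (P n x)"])
      show "convex {a<..<b}" by simp
      show "t0 \<in> {a<..<b}" using ab by simp
      show "(\<lambda>n. P (Suc n) t0) \<longlonglongrightarrow> y0" by (simp add: Pt0)
      fix n x assume x: "x \<in> {a<..<b}"
      then have "x \<in> I" using ab(5) by auto
      then show "(P (Suc n) has_derivative (\<lambda>h. h *\<^sub>R L x (P n x))) (at x within {a<..<b})"
        using derP[of x n] by (simp add: has_vector_derivative_def has_derivative_at_withinI)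
    next
      fix e :: real assume e: "e > 0"
      have eM: "e / (M + 1) > 0" using e M(1) by simp
      show "\<forall>\<^sub>F n in sequentially. \<forall>x\<in>{a<..<b}. \<forall>h. norm (h *\<^sub>R L x (P n x) - h *\<^sub>R L x (Y x)) \<le> e * norm h"
        using unif[OF eM]
      proof (rule eventually_mono)
        fix n assume H: "\<forall>s\<in>{a..b}. norm (P n s - Y s) < e / (M + 1)"
        show "\<forall>x\<in>{a<..<b}. \<forall>h. norm (h *\<^sub>R L x (P n x) - h *\<^sub>R L x (Y x)) \<le> e * norm h"
        proof (intro ballI allI)
          fix x h assume "x \<in> {a<..<b}"
          then have x: "x \<in> {a..b}" by auto
          have "norm (h *\<^sub>R L x (P n x) - h *\<^sub>R L x (Y x)) = \<bar>h\<bar> * norm (L x (P n x - Y x))"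
            by (simp add: Ldiff[symmetric] scaleR_diff_right[symmetric])
          also have "\<dots> \<le> \<bar>h\<bar> * (K x * norm (P n x - Y x))"
            by (rule mult_left_mono[OF Lb]) simp
          also have "\<dots> \<le> \<bar>h\<bar> * (M * (e / (M + 1)))"
            by (intro mult_left_mono mult_mono M(2) x less_imp_le[OF H[rule_format, OF x]]) (use M(1) in auto)
          also have "\<dots> \<le> \<bar>h\<bar> * e"
          proof (rule mult_left_mono)
            have "M * (e / (M + 1)) = e * (M / (M + 1))" by simp
            also have "\<dots> \<le> e * 1" using M(1) e by (intro mult_left_mono) auto
            finally show "M * (e / (M + 1)) \<le> e" by simp
          qed simp
          finally show "norm (h *\<^sub>R L x (P n x) - h *\<^sub>R L x (Y x)) \<le> e * norm h"
            by (simp add: mult.commute)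
        qed
      qed
    qed
    then obtain g where g: "\<forall>x\<in>{a<..<b}. (\<lambda>n. P (Suc n) x) \<longlonglongrightarrow> g x \<and>
        (g has_derivative (\<lambda>h. h *\<^sub>R L x (Y x))) (at x within {a<..<b})" ..
    have tS: "t \<in> {a<..<b}" using ab by simp
    have gY: "g x = Y x" if "x \<in> {a<..<b}" for x
    proof -
      have "x \<in> {a..b}" using that by auto
      then have "(\<lambda>n. P (Suc n) x) \<longlonglongrightarrow> Y x" using Ylim LIMSEQ_Suc by blast
      then show ?thesis using g that LIMSEQ_unique by blast
    qed
    have "(g has_derivative (\<lambda>h. h *\<^sub>R L t (Y t))) (at t)"
      using g[rule_format, OF tS] unfolding at_within_open[OF tS open_greaterThanLessThan] by blast
    then have "(Y has_derivative (\<lambda>h. h *\<^sub>R L t (Y t))) (at t)"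
      by (rule has_derivative_transform_within_open[OF _ open_greaterThanLessThan tS]) (rule gY)
    then show ?thesis by (simp add: has_vector_derivative_def)
  qed
  ultimately show ?thesis unfolding L_def by (intro exI[of _ Y] conjI ballI) auto
qed

lemma bl_axis: "bounded_linear (axis j :: 'a::euclidean_space \<Rightarrow> 'a^'n)"
proof -
  have "linear (axis j :: 'a \<Rightarrow> 'a^'n)"
    by (rule linearI) (simp_all add: axis_def vec_eq_iff)
  then show ?thesis using linear_conv_bounded_linear by blast
qed

lemma vec_as_sum: "(\<chi> i. F i) = (\<Sum>j\<in>UNIV. axis j (F j) :: 'a::real_normed_vector^'n)"
  by (simp add: vec_eq_iff axis_def if_distrib cong: if_cong)

lemma has_vd_vec:
  fixes F F' :: "'n::finite \<Rightarrow> real \<Rightarrow> 'a::euclidean_space"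
  assumes "\<And>i. (F i has_vector_derivative F' i t) (at t)"
  shows "((\<lambda>s. \<chi> i. F i s) has_vector_derivative (\<chi> i. F' i t)) (at t)"
proof -
  have "((\<lambda>s. \<Sum>j\<in>UNIV. axis j (F j s)) has_vector_derivative (\<Sum>j\<in>UNIV. axis j (F' j t))) (at t)"
    by (intro has_vector_derivative_sum bounded_linear.has_vector_derivative[OF bl_axis] assms)
  then show ?thesis unfolding vec_as_sum .
qed

lemma Cn_vec:
  fixes F :: "'n::finite \<Rightarrow> real \<Rightarrow> 'a::euclidean_space"
  shows "(\<And>i. Cn n I (F i)) \<Longrightarrow> Cn n I (\<lambda>s. \<chi> i. F i s)"
proof (induction n arbitrary: F)
  case (Suc n)
  have "\<exists>G. \<forall>i. (\<forall>t\<in>I. (F i has_vector_derivative G i t) (at t)) \<and> Cn n I (G i)"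
  proof (rule choice, rule allI)
    fix i
    obtain g where "\<And>t. t \<in> I \<Longrightarrow> (F i has_vector_derivative g t) (at t)" "Cn n I g"
      by (rule Cn_SucE[OF Suc.prems[of i]]) blast
    then show "\<exists>g. (\<forall>t\<in>I. (F i has_vector_derivative g t) (at t)) \<and> Cn n I g" by blast
  qed
  then obtain G where G: "\<And>i t. t \<in> I \<Longrightarrow> (F i has_vector_derivative G i t) (at t)" "\<And>i. Cn n I (G i)"
    by blast
  show ?case
  proof (rule Cn_SucI[of I _ "\<lambda>t. \<chi> i. G i t"])
    show "((\<lambda>s. \<chi> i. F i s) has_vector_derivative (\<chi> i. G i t)) (at t)" if "t \<in> I" for t
      by (rule has_vd_vec) (rule G(1)[OF that])
    show "Cn n I (\<lambda>t. \<chi> i. G i t)" by (rule Suc.IH) (rule G(2))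
  qed
qed simp

lemma sm_vec:
  fixes F :: "'n::finite \<Rightarrow> real \<Rightarrow> 'a::euclidean_space"
  shows "(\<And>i. sm I (F i)) \<Longrightarrow> sm I (\<lambda>s. \<chi> i. F i s)"
  unfolding sm_def using Cn_vec by blast

lemma sm_cont: assumes "sm I f" shows "continuous_on I f"
proof -
  obtain g where g: "\<And>t. t \<in> I \<Longrightarrow> (f has_vector_derivative g t) (at t)"
    by (rule Cn_SucE[OF assms[unfolded sm_def, rule_format, of "Suc 0"]]) blast
  show ?thesis
    by (intro continuous_at_imp_continuous_on ballI has_vector_derivative_continuous[OF g])
qed

lemma vector_4 [simp]:
 "(vector [x,y,z,w] ::('a::zero)^4)$1 = x"
 "(vector [x,y,z,w] ::('a::zero)^4)$2 = y"
 "(vector [x,y,z,w] ::('a::zero)^4)$3 = z"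
 "(vector [x,y,z,w] ::('a::zero)^4)$4 = w"
  unfolding vector_def by simp_all

lemma mtd: "(A ** transpose B) $ i $ j = (A $ i) \<bullet> ((B $ j) :: real^'n)"
  by (simp add: matrix_matrix_mult_def transpose_def inner_vec_def mult.commute)

lemma UNIV_4: "(UNIV::4 set) = {1,2,3,4}" using exhaust_4 by auto

lemma ode_sm:
  fixes u v w z Y :: "real \<Rightarrow> 'a::real_inner"
  assumes "sm I u" "sm I v" "sm I w" "sm I z"
    and "\<And>t. t \<in> I \<Longrightarrow> (Y has_vector_derivative (Y t \<bullet> u t) *\<^sub>R v t + (Y t \<bullet> w t) *\<^sub>R z t) (at t)"
  shows "sm I Y"
  unfolding sm_def
proof
  fix n show "Cn n I Y"
  proof (induction n)
    case (Suc n)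
    have c: "Cn n I u" "Cn n I v" "Cn n I w" "Cn n I z" using assms(1-4) unfolding sm_def by auto
    show ?case
    proof (rule Cn_SucI[of I _ "\<lambda>t. (Y t \<bullet> u t) *\<^sub>R v t + (Y t \<bullet> w t) *\<^sub>R z t"])
      show "(Y has_vector_derivative (Y t \<bullet> u t) *\<^sub>R v t + (Y t \<bullet> w t) *\<^sub>R z t) (at t)" if "t \<in> I" for t
        by (rule assms(5)[OF that])
      show "Cn n I (\<lambda>t. (Y t \<bullet> u t) *\<^sub>R v t + (Y t \<bullet> w t) *\<^sub>R z t)"
        by (intro Cn_add Cn_bilinear[OF bounded_bilinear_scaleR] Cn_bilinear[OF bounded_bilinear_inner] Suc.IH c)
    qed
  qed simp
qed

lemma deriv0_of_const:
  fixes f :: "real \<Rightarrow> real"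
  assumes "open I" "t \<in> I" "\<And>s. s \<in> I \<Longrightarrow> f s = c" "(f has_real_derivative f') (at t)"
  shows "f' = 0"
proof -
  have "((\<lambda>s. c) has_derivative (*) f') (at t)"
    using has_derivative_transform_within_open[OF assms(4)[unfolded has_field_derivative_def] assms(1,2)] assms(3)
    by auto
  then have "((\<lambda>s. c) has_real_derivative f') (at t)" by (simp add: has_field_derivative_def)
  moreover have "((\<lambda>s. c) has_real_derivative 0) (at t)" by (rule DERIV_const)
  ultimately show ?thesis by (rule DERIV_unique)
qed

lemma zero_deriv_const:
  fixes f :: "real \<Rightarrow> real"
  assumes I: "open_interval I" and d: "\<And>t. t \<in> I \<Longrightarrow> (f has_real_derivative 0) (at t)"
    and "t0 \<in> I" "t \<in> I"
  shows "f t = f t0"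
proof -
  have "convex I" using I by (simp add: open_interval_def is_interval_convex)
  moreover have "(f has_derivative (\<lambda>h. 0)) (at x within I)" if "x \<in> I" for x
  proof -
    have e: "((*) (0::real)) = (\<lambda>h. 0)" by (rule ext) simp
    have "(f has_derivative (\<lambda>h. 0)) (at x)" using d[OF that] unfolding has_field_derivative_def e .
    then show ?thesis by (rule has_derivative_at_withinI)
  qed
  ultimately obtain c where "\<forall>x\<in>I. f x = c" using has_derivative_zero_constant by blast
  then show ?thesis using assms(3,4) by simp
qed

lemma inner_deriv:
  fixes f g :: "real \<Rightarrow> 'a::real_inner"
  assumes "(f has_vector_derivative f') (at t)" "(g has_vector_derivative g') (at t)"
  shows "((\<lambda>s. f s \<bullet> g s) has_real_derivative (f t \<bullet> g' + f' \<bullet> g t)) (at t)"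
  using bounded_bilinear.has_vector_derivative[OF bounded_bilinear_inner assms]
  by (simp add: has_real_derivative_iff_has_vector_derivative)

lemma dir1:
  fixes I :: "real set" and \<gamma> :: "real \<Rightarrow> real^4"
  assumes "open_interval I" and "arclength_curve I \<gamma>" and fZ: "frame_typeD I \<gamma> Z"
  shows "\<exists>(D1 :: real \<Rightarrow> real^4) (d1 :: real \<Rightarrow> real).
            smooth_on_real I D1 \<and> smooth_on_real I d1 \<and>
            (\<forall>t\<in>I. norm (D1 t) = 1 \<and> D1 t \<bullet> tangent \<gamma> t = 0 \<and>
                    vector_derivative (tangent \<gamma>) (at t) = d1 t *\<^sub>R D1 t)"
proof -
  have oI: "open I" using assms(1) by (simp add: open_interval_def)
  have smZ: "sm I Z" and orth: "\<And>t. t \<in> I \<Longrightarrow> orthogonal_matrix (Z t)"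
    and Z1: "\<And>t. t \<in> I \<Longrightarrow> Z t $ 1 = tangent \<gamma> t"
    using fZ by (auto simp: frame_typeD_def is_frame_def smooth_iff_sm[OF oI])
  obtain p x1 x2 x3 where p: "p permutes UNIV" "p 1 = 1" and sx1: "smooth_on_real I x1"
    and X: "\<And>t. t \<in> I \<Longrightarrow> (\<chi> i j. coeff_matrix Z t $ p i $ p j) = typeD_matrix (x1 t) (x2 t) (x3 t)"
    using fZ unfolding frame_typeD_def by blast
  define D1 where "D1 t = Z t $ p 2" for t
  have smD1: "smooth_on_real I D1"
    unfolding smooth_iff_sm[OF oI] D1_def by (rule sm_nth[OF smZ])
  have p21: "p 2 \<noteq> p 1"
  proof
    assume "p 2 = p 1"
    then have "(2::4) = 1" using permutes_inj[OF p(1)] by (simp add: inj_eq)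
    then show False by simp
  qed
  have "norm (D1 t) = 1 \<and> D1 t \<bullet> tangent \<gamma> t = 0 \<and>
        vector_derivative (tangent \<gamma>) (at t) = x1 t *\<^sub>R D1 t" if tI: "t \<in> I" for t
  proof (intro conjI)
    have row_eq: "row i A = A $ i" for i and A :: "real^4^4" by (simp add: row_def)
    have o: "(\<forall>i. norm (Z t $ i) = 1) \<and> (\<forall>i j. i \<noteq> j \<longrightarrow> Z t $ i \<bullet> Z t $ j = 0)"
      using orth[OF tI] unfolding orthogonal_matrix_orthonormal_rows row_eq orthogonal_def .
    have rows: "\<And>i. norm (Z t $ i) = 1" "\<And>i j. i \<noteq> j \<Longrightarrow> Z t $ i \<bullet> Z t $ j = 0"
      using o by blast+
    show "norm (D1 t) = 1" unfolding D1_def by (rule rows(1))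
    show "D1 t \<bullet> tangent \<gamma> t = 0"
    proof -
      have "Z t $ p 2 \<bullet> Z t $ p 1 = 0" by (rule rows(2)[OF p21])
      then show ?thesis unfolding D1_def Z1[OF tI, symmetric] p(2) .
    qed
    define Z' where "Z' = vector_derivative Z (at t)"
    have dZ: "(Z has_vector_derivative Z') (at t)"
      using sm_step[OF oI smZ] tI by (simp add: Z'_def)
    have "((\<lambda>s. Z s $ 1) has_vector_derivative Z' $ 1) (at t)"
      by (rule bounded_linear.has_vector_derivative[OF bounded_linear_vec_nth dZ])
    then have "(tangent \<gamma> has_vector_derivative Z' $ 1) (at t)"
      by (rule has_vector_derivative_transform_within_open[OF _ oI tI]) (simp add: Z1)
    then have vd: "vector_derivative (tangent \<gamma>) (at t) = Z' $ 1" by (rule vector_derivative_at)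
    define X where "X = coeff_matrix Z t"
    have "X ** Z t = Z' ** (transpose (Z t) ** Z t)"
      by (simp add: X_def coeff_matrix_def Z'_def matrix_mul_assoc)
    also have "\<dots> = Z'" using orth[OF tI] by (simp add: orthogonal_matrix)
    finally have XZ: "X ** Z t = Z'" .
    have Xe: "X $ 1 $ p k = typeD_matrix (x1 t) (x2 t) (x3 t) $ 1 $ k" for k
    proof -
      have "(\<chi> i j. X $ p i $ p j) $ 1 $ k = typeD_matrix (x1 t) (x2 t) (x3 t) $ 1 $ k"
        using X[OF tI] by (simp add: X_def)
      then show ?thesis using p(2) by simp
    qed
    have "Z' $ 1 $ j = x1 t * D1 t $ j" for j
    proof -
      have "Z' $ 1 $ j = (\<Sum>k\<in>UNIV. X $ 1 $ k * Z t $ k $ j)"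
        unfolding XZ[symmetric] by (simp add: matrix_matrix_mult_def)
      also have "\<dots> = (\<Sum>k\<in>UNIV. X $ 1 $ p k * Z t $ p k $ j)"
        using sum.permute[OF p(1), of "\<lambda>k. X $ 1 $ k * Z t $ k $ j"] by (simp add: comp_def)
      also have "\<dots> = (\<Sum>k\<in>UNIV. typeD_matrix (x1 t) (x2 t) (x3 t) $ 1 $ k * Z t $ p k $ j)"
        by (simp add: Xe)
      also have "\<dots> = x1 t * D1 t $ j"
      proof -
        have td: "typeD_matrix (x1 t) (x2 t) (x3 t) $ 1 = vector [0, x1 t, 0, 0]"
          by (simp add: typeD_matrix_def)
        show ?thesis unfolding td UNIV_4 D1_def by simp
      qed
      finally show ?thesis .
    qed
    then show "vector_derivative (tangent \<gamma>) (at t) = x1 t *\<^sub>R D1 t"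
      unfolding vd by (simp add: vec_eq_iff)
  qed
  then show ?thesis by (intro exI[of _ D1] exI[of _ x1] conjI smD1 sx1) simp
qed

lemma unit_perp_exists:
  fixes S :: "(real^4) set"
  assumes "finite S" "card S < 4"
  obtains e where "norm e = 1" "\<And>y. y \<in> S \<Longrightarrow> e \<bullet> y = 0"
proof -
  have "dim S \<le> card S" by (rule dim_le_card'[OF assms(1)])
  then have "dim S < DIM(real^4)" using assms(2) by simp
  then obtain x where x: "x \<noteq> 0" "\<And>y. y \<in> span S \<Longrightarrow> orthogonal x y"
    by (rule orthogonal_to_subspace_exists) blast
  show ?thesis
  proof (rule that[of "x /\<^sub>R norm x"])
    show "norm (x /\<^sub>R norm x) = 1" using x(1) by simp
    fix y assume "y \<in> S"
    then have "x \<bullet> y = 0" using x(2)[of y] span_base[of y S] by (simp add: orthogonal_def)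
    then show "(x /\<^sub>R norm x) \<bullet> y = 0" by simp
  qed
qed

lemma dir2:
  fixes I :: "real set" and \<gamma> :: "real \<Rightarrow> real^4" and D1 :: "real \<Rightarrow> real^4" and d1 :: "real \<Rightarrow> real"
  assumes I: "open_interval I" and ac: "arclength_curve I \<gamma>"
    and sD1: "smooth_on_real I D1" and sd1: "smooth_on_real I d1"
    and hyp: "\<forall>t\<in>I. norm (D1 t) = 1 \<and> D1 t \<bullet> tangent \<gamma> t = 0 \<and>
                    vector_derivative (tangent \<gamma>) (at t) = d1 t *\<^sub>R D1 t"
  shows "\<exists>Z. frame_typeD I \<gamma> Z"
proof -
  have oI: "open I" using I by (simp add: open_interval_def)
  define T where "T = tangent \<gamma>"
  have smg: "sm I \<gamma>" using ac by (simp add: arclength_curve_def smooth_iff_sm[OF oI])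
  have Tdef: "T = (\<lambda>t. vector_derivative \<gamma> (at t))" by (rule ext) (simp add: T_def tangent_def)
  have smT: "sm I T" unfolding Tdef using sm_step[OF oI smg] by blast
  have TT: "T t \<bullet> T t = 1" if "t \<in> I" for t
    using ac that by (simp add: arclength_curve_def T_def norm_eq_1)
  have smD1: "sm I D1" using sD1 smooth_iff_sm[OF oI] by blast
  have smd1: "sm I d1" using sd1 smooth_iff_sm[OF oI] by blast
  define D1' where "D1' = (\<lambda>t. vector_derivative D1 (at t))"
  have smD1': "sm I D1'" and dD1: "\<And>t. t \<in> I \<Longrightarrow> (D1 has_vector_derivative D1' t) (at t)"
    using sm_step[OF oI smD1] unfolding D1'_def by auto
  have dT: "(T has_vector_derivative d1 t *\<^sub>R D1 t) (at t)" if "t \<in> I" for t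
  proof -
    have "(T has_vector_derivative vector_derivative T (at t)) (at t)"
      using sm_step[OF oI smT] that by blast
    moreover have "vector_derivative T (at t) = d1 t *\<^sub>R D1 t" using hyp that by (simp add: T_def)
    ultimately show ?thesis by simp
  qed
  have DD: "D1 t \<bullet> D1 t = 1" if "t \<in> I" for t using hyp that by (simp add: norm_eq_1)
  have DT: "D1 t \<bullet> T t = 0" if "t \<in> I" for t using hyp that by (simp add: T_def)
  have TD: "T t \<bullet> D1 t = 0" if "t \<in> I" for t using DT[OF that] by (simp add: inner_commute)
  have D'D: "D1' t \<bullet> D1 t = 0" if tI: "t \<in> I" for t
  proof -
    have h: "((\<lambda>s. D1 s \<bullet> D1 s) has_real_derivative (D1 t \<bullet> D1' t + D1' t \<bullet> D1 t)) (at t)"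
      by (rule inner_deriv[OF dD1[OF tI] dD1[OF tI]])
    have "D1 t \<bullet> D1' t + D1' t \<bullet> D1 t = 0"
      by (rule deriv0_of_const[OF oI tI _ h]) (rule DD)
    then show ?thesis by (simp add: inner_commute)
  qed
  have D'T: "D1' t \<bullet> T t = - d1 t" if tI: "t \<in> I" for t
  proof -
    have h: "((\<lambda>s. D1 s \<bullet> T s) has_real_derivative (D1 t \<bullet> (d1 t *\<^sub>R D1 t) + D1' t \<bullet> T t)) (at t)"
      by (rule inner_deriv[OF dD1[OF tI] dT[OF tI]])
    have "D1 t \<bullet> (d1 t *\<^sub>R D1 t) + D1' t \<bullet> T t = 0"
      by (rule deriv0_of_const[OF oI tI _ h]) (rule DT)
    then show ?thesis using DD[OF tI] by simp
  qed
  define L where "L t y = (y \<bullet> D1' t) *\<^sub>R (- D1 t) + (y \<bullet> D1 t) *\<^sub>R (- (d1 t *\<^sub>R T t))" for t y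
  have smv: "sm I (\<lambda>t. - D1 t)" by (rule sm_minus[OF smD1])
  have smz: "sm I (\<lambda>t. - (d1 t *\<^sub>R T t))" by (rule sm_minus[OF sm_scaleR[OF smd1 smT]])
  have cu: "continuous_on I D1'" by (rule sm_cont[OF smD1'])
  have cv: "continuous_on I (\<lambda>t. - D1 t)" by (rule sm_cont[OF smv])
  have cw: "continuous_on I D1" by (rule sm_cont[OF smD1])
  have cz: "continuous_on I (\<lambda>t. - (d1 t *\<^sub>R T t))" by (rule sm_cont[OF smz])
  obtain t0 where t0: "t0 \<in> I" using I by (auto simp: open_interval_def)
  obtain e2 :: "real^4" where e2: "norm e2 = 1" "\<And>y. y \<in> {T t0, D1 t0} \<Longrightarrow> e2 \<bullet> y = 0"
    by (rule unit_perp_exists[of "{T t0, D1 t0}"]) (simp_all add: card_insert_if)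
  obtain e3 :: "real^4" where e3: "norm e3 = 1" "\<And>y. y \<in> {T t0, D1 t0, e2} \<Longrightarrow> e3 \<bullet> y = 0"
    by (rule unit_perp_exists[of "{T t0, D1 t0, e2}"]) (simp_all add: card_insert_if)
  have ode: "\<exists>Y. Y t0 = y0 \<and> (\<forall>t\<in>I. (Y has_vector_derivative L t (Y t)) (at t))" for y0
    using linear_ode[OF I t0 cu cv cw cz, of y0] unfolding L_def by simp
  obtain N2 where N2: "N2 t0 = e2" "\<And>t. t \<in> I \<Longrightarrow> (N2 has_vector_derivative L t (N2 t)) (at t)"
    using ode[of e2] by blast
  obtain N3 where N3: "N3 t0 = e3" "\<And>t. t \<in> I \<Longrightarrow> (N3 has_vector_derivative L t (N3 t)) (at t)"
    using ode[of e3] by blast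
  have perp: "N t \<bullet> T t = 0 \<and> N t \<bullet> D1 t = 0"
    if dN: "\<And>t. t \<in> I \<Longrightarrow> (N has_vector_derivative L t (N t)) (at t)"
      and i: "N t0 \<bullet> T t0 = 0" "N t0 \<bullet> D1 t0 = 0" and tI: "t \<in> I" for N t
  proof
    have "((\<lambda>s. N s \<bullet> T s) has_real_derivative 0) (at s)" if sI: "s \<in> I" for s
    proof -
      have "((\<lambda>s. N s \<bullet> T s) has_real_derivative (N s \<bullet> (d1 s *\<^sub>R D1 s) + L s (N s) \<bullet> T s)) (at s)"
        by (rule inner_deriv[OF dN[OF sI] dT[OF sI]])
      moreover have "N s \<bullet> (d1 s *\<^sub>R D1 s) + L s (N s) \<bullet> T s = 0"
        by (simp add: L_def inner_add_left inner_diff_left inner_minus_left inner_add_right inner_diff_right inner_minus_right algebra_simps DT[OF sI] TT[OF sI])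
      ultimately show ?thesis by simp
    qed
    then have "N t \<bullet> T t = N t0 \<bullet> T t0" by (rule zero_deriv_const[OF I _ t0 tI])
    then show "N t \<bullet> T t = 0" using i by simp
    have "((\<lambda>s. N s \<bullet> D1 s) has_real_derivative 0) (at s)" if sI: "s \<in> I" for s
    proof -
      have "((\<lambda>s. N s \<bullet> D1 s) has_real_derivative (N s \<bullet> D1' s + L s (N s) \<bullet> D1 s)) (at s)"
        by (rule inner_deriv[OF dN[OF sI] dD1[OF sI]])
      moreover have "N s \<bullet> D1' s + L s (N s) \<bullet> D1 s = 0"
        by (simp add: L_def inner_add_left inner_diff_left inner_minus_left inner_add_right inner_diff_right inner_minus_right algebra_simps DD[OF sI] TD[OF sI])
      ultimately show ?thesis by simp
    qed
    then have "N t \<bullet> D1 t = N t0 \<bullet> D1 t0" by (rule zero_deriv_const[OF I _ t0 tI])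
    then show "N t \<bullet> D1 t = 0" using i by simp
  qed
  have N2p: "N2 t \<bullet> T t = 0 \<and> N2 t \<bullet> D1 t = 0" if "t \<in> I" for t
    by (rule perp[OF N2(2) _ _ that]) (use e2 N2(1) in auto)
  have N3p: "N3 t \<bullet> T t = 0 \<and> N3 t \<bullet> D1 t = 0" if "t \<in> I" for t
    by (rule perp[OF N3(2) _ _ that]) (use e3 N3(1) in auto)
  have prod: "N t \<bullet> M t = N t0 \<bullet> M t0"
    if dN: "\<And>t. t \<in> I \<Longrightarrow> (N has_vector_derivative L t (N t)) (at t)"
      and dM: "\<And>t. t \<in> I \<Longrightarrow> (M has_vector_derivative L t (M t)) (at t)"
      and pN: "\<And>t. t \<in> I \<Longrightarrow> N t \<bullet> T t = 0 \<and> N t \<bullet> D1 t = 0"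
      and pM: "\<And>t. t \<in> I \<Longrightarrow> M t \<bullet> T t = 0 \<and> M t \<bullet> D1 t = 0"
      and tI: "t \<in> I" for N M t
  proof (rule zero_deriv_const[OF I _ t0 tI])
    fix s assume sI: "s \<in> I"
    have "((\<lambda>s. N s \<bullet> M s) has_real_derivative (N s \<bullet> L s (M s) + L s (N s) \<bullet> M s)) (at s)"
      by (rule inner_deriv[OF dN[OF sI] dM[OF sI]])
    moreover have "N s \<bullet> L s (M s) + L s (N s) \<bullet> M s = 0"
      using pN[OF sI] pM[OF sI]
      by (simp add: L_def inner_add_left inner_diff_left inner_minus_left inner_add_right inner_diff_right inner_minus_right algebra_simps inner_add_right inner_commute)
    ultimately show "((\<lambda>s. N s \<bullet> M s) has_real_derivative 0) (at s)" by simp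
  qed
  have N22: "N2 t \<bullet> N2 t = 1" if "t \<in> I" for t
    using prod[OF N2(2) N2(2) N2p N2p that] N2(1) e2(1) by (simp add: norm_eq_1)
  have N33: "N3 t \<bullet> N3 t = 1" if "t \<in> I" for t
    using prod[OF N3(2) N3(2) N3p N3p that] N3(1) e3(1) by (simp add: norm_eq_1)
  have N23: "N2 t \<bullet> N3 t = 0" if "t \<in> I" for t
  proof -
    have "e3 \<bullet> e2 = 0" using e3(2) by simp
    then show ?thesis using prod[OF N2(2) N3(2) N2p N3p that] N2(1) N3(1) by (simp add: inner_commute)
  qed
  have smN2: "sm I N2" by (rule ode_sm[OF smD1' smv smD1 smz]) (use N2(2) in \<open>simp add: L_def\<close>)
  have smN3: "sm I N3" by (rule ode_sm[OF smD1' smv smD1 smz]) (use N3(2) in \<open>simp add: L_def\<close>)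
  define R :: "4 \<Rightarrow> real \<Rightarrow> real^4" where
    "R i = (if i = 1 then T else if i = 2 then D1 else if i = 3 then N2 else N3)" for i
  define R' :: "4 \<Rightarrow> real \<Rightarrow> real^4" where
    "R' i t = (if i = 1 then d1 t *\<^sub>R D1 t else if i = 2 then D1' t else if i = 3 then L t (N2 t) else L t (N3 t))" for i t
  define Z where "Z = (\<lambda>t. \<chi> i. R i t)"
  have Rs: "R 1 = T" "R 2 = D1" "R 3 = N2" "R 4 = N3" by (simp_all add: R_def)
  have R's: "R' 1 t = d1 t *\<^sub>R D1 t" "R' 2 t = D1' t" "R' 3 t = L t (N2 t)" "R' 4 t = L t (N3 t)" for t
    by (simp_all add: R'_def)
  have smR: "sm I (R i)" for i
    using exhaust_4[of i] smT smD1 smN2 smN3 by (auto simp: Rs)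
  have dR: "(R i has_vector_derivative R' i t) (at t)" if tI: "t \<in> I" for i t
    using exhaust_4[of i] dT[OF tI] dD1[OF tI] N2(2)[OF tI] N3(2)[OF tI] by (auto simp: Rs R's)
  have smZ: "sm I Z" unfolding Z_def by (rule sm_vec[OF smR])
  have ZR: "Z t $ i = R i t" for t i by (simp add: Z_def)
  have cm: "coeff_matrix Z t $ i $ j = R' i t \<bullet> R j t" if tI: "t \<in> I" for t i j
  proof -
    have "(Z has_vector_derivative (\<chi> i. R' i t)) (at t)"
      unfolding Z_def by (rule has_vd_vec) (rule dR[OF tI])
    then have "vector_derivative Z (at t) = (\<chi> i. R' i t)" by (rule vector_derivative_at)
    then show ?thesis by (simp add: coeff_matrix_def mtd ZR)
  qed
  define x2 where "x2 t = D1' t \<bullet> N2 t" for t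
  define x3 where "x3 t = D1' t \<bullet> N3 t" for t
  have sx2: "sm I x2" unfolding x2_def[abs_def] by (rule sm_inner[OF smD1' smN2])
  have sx3: "sm I x3" unfolding x3_def[abs_def] by (rule sm_inner[OF smD1' smN3])
  have typeD: "(\<chi> i j. coeff_matrix Z t $ id i $ id j) = typeD_matrix (d1 t) (x2 t) (x3 t)"
    if tI: "t \<in> I" for t
  proof -
    have f: "T t \<bullet> T t = 1" "D1 t \<bullet> D1 t = 1" "D1 t \<bullet> T t = 0" "T t \<bullet> D1 t = 0"
      "D1' t \<bullet> D1 t = 0" "D1' t \<bullet> T t = - d1 t"
      "N2 t \<bullet> T t = 0" "N2 t \<bullet> D1 t = 0" "N3 t \<bullet> T t = 0" "N3 t \<bullet> D1 t = 0"
      "T t \<bullet> N2 t = 0" "D1 t \<bullet> N2 t = 0" "T t \<bullet> N3 t = 0" "D1 t \<bullet> N3 t = 0"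
      "N2 t \<bullet> N2 t = 1" "N3 t \<bullet> N3 t = 1" "N2 t \<bullet> N3 t = 0" "N3 t \<bullet> N2 t = 0"
      using TT[OF tI] DD[OF tI] DT[OF tI] TD[OF tI] D'D[OF tI] D'T[OF tI] N2p[OF tI] N3p[OF tI]
        N22[OF tI] N33[OF tI] N23[OF tI]
      by (simp_all add: inner_commute)
    have g: "N2 t \<bullet> D1' t = x2 t" "N3 t \<bullet> D1' t = x3 t"
      unfolding x2_def x3_def by (simp_all add: inner_commute)
    show ?thesis
      unfolding vec_eq_iff forall_4
      by (simp add: cm[OF tI] Rs R's typeD_matrix_def L_def f g x2_def x3_def inner_add_left inner_diff_left
          inner_minus_left)
  qed
  have orthZ: "orthogonal_matrix (Z t)" if tI: "t \<in> I" for t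
  proof -
    have row_eq: "row i A = A $ i" for i and A :: "real^4^4" by (simp add: row_def)
    have f: "T t \<bullet> T t = 1" "D1 t \<bullet> D1 t = 1" "D1 t \<bullet> T t = 0" "T t \<bullet> D1 t = 0"
      "N2 t \<bullet> T t = 0" "N2 t \<bullet> D1 t = 0" "N3 t \<bullet> T t = 0" "N3 t \<bullet> D1 t = 0"
      "T t \<bullet> N2 t = 0" "D1 t \<bullet> N2 t = 0" "T t \<bullet> N3 t = 0" "D1 t \<bullet> N3 t = 0"
      "N2 t \<bullet> N2 t = 1" "N3 t \<bullet> N3 t = 1" "N2 t \<bullet> N3 t = 0" "N3 t \<bullet> N2 t = 0"
      using TT[OF tI] DD[OF tI] DT[OF tI] TD[OF tI] N2p[OF tI] N3p[OF tI]
        N22[OF tI] N33[OF tI] N23[OF tI]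
      by (simp_all add: inner_commute)
    show ?thesis
      unfolding orthogonal_matrix_orthonormal_rows row_eq orthogonal_def ZR norm_eq_1 forall_4
      by (simp add: Rs f)
  qed
  have "frame_typeD I \<gamma> Z"
    unfolding frame_typeD_def is_frame_def
  proof (intro conjI ballI exI)
    show "smooth_on_real I Z" using smZ smooth_iff_sm[OF oI] by blast
    fix t assume tI: "t \<in> I"
    show "orthogonal_matrix (Z t)" by (rule orthZ[OF tI])
    show "Z t $ 1 = tangent \<gamma> t" by (simp add: ZR Rs T_def)
  next
    show "id permutes UNIV" by (rule permutes_id)
    show "id 1 = 1" by simp
    show "smooth_on_real I d1" by (rule sd1)
    show "smooth_on_real I x2" using sx2 smooth_iff_sm[OF oI] by blast
    show "smooth_on_real I x3" using sx3 smooth_iff_sm[OF oI] by blast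
    fix t assume tI: "t \<in> I"
    show "(\<chi> i j. coeff_matrix Z t $ id i $ id j) = typeD_matrix (d1 t) (x2 t) (x3 t)"
      by (rule typeD[OF tI])
  qed
  then show ?thesis by blast
qed

theorem proposition1:
  fixes I :: "real set" and \<gamma> :: "real \<Rightarrow> real^4"
  assumes "open_interval I" and "arclength_curve I \<gamma>"
  shows "(\<exists>Z. frame_typeD I \<gamma> Z) \<longleftrightarrow>
         (\<exists>(D1 :: real \<Rightarrow> real^4) (d1 :: real \<Rightarrow> real).
            smooth_on_real I D1 \<and> smooth_on_real I d1 \<and>
            (\<forall>t\<in>I. norm (D1 t) = 1 \<and> D1 t \<bullet> tangent \<gamma> t = 0 \<and>
                    vector_derivative (tangent \<gamma>) (at t) = d1 t *\<^sub>R D1 t))"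
proof
  assume "\<exists>Z. frame_typeD I \<gamma> Z"
  then obtain Z where "frame_typeD I \<gamma> Z" ..
  then show "\<exists>(D1 :: real \<Rightarrow> real^4) (d1 :: real \<Rightarrow> real).
            smooth_on_real I D1 \<and> smooth_on_real I d1 \<and>
            (\<forall>t\<in>I. norm (D1 t) = 1 \<and> D1 t \<bullet> tangent \<gamma> t = 0 \<and>
                    vector_derivative (tangent \<gamma>) (at t) = d1 t *\<^sub>R D1 t)"
    by (rule dir1[OF assms])
next
  assume "\<exists>(D1 :: real \<Rightarrow> real^4) (d1 :: real \<Rightarrow> real).
            smooth_on_real I D1 \<and> smooth_on_real I d1 \<and>
            (\<forall>t\<in>I. norm (D1 t) = 1 \<and> D1 t \<bullet> tangent \<gamma> t = 0 \<and>
                    vector_derivative (tangent \<gamma>) (at t) = d1 t *\<^sub>R D1 t)"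
  then obtain D1 :: "real \<Rightarrow> real^4" and d1 :: "real \<Rightarrow> real" where
    h: "smooth_on_real I D1" "smooth_on_real I d1"
       "\<forall>t\<in>I. norm (D1 t) = 1 \<and> D1 t \<bullet> tangent \<gamma> t = 0 \<and>
                    vector_derivative (tangent \<gamma>) (at t) = d1 t *\<^sub>R D1 t"
    by blast
  show "\<exists>Z. frame_typeD I \<gamma> Z" by (rule dir2[OF assms h])
qed

end
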